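(* Let $n\ge 2$, $N=\{1,\dots,n\}$, for each $i\in N$ let $A_i$ be a nonempty finite set, $A=\prod_{i\in N}A_i$, $u_i:A\to\mathbb{R}$, $u(a)=(u_i(a))_{i\in N}$, let $\Delta\in(0,1]$ and $\lambda\in\mathbb{R}^n\setminus\{\mathbf 0\}$. If $\mathcal{A}^*_\lambda(\Delta)\subseteq S^C$, then for every $u^{[n]}\in\mathcal{U}^*_\lambda(\Delta)$ there exists $m\in\{1,\dots,n-1\}$ such that $$-\sum_{k=1}^m\Delta^{k-1}w_k(u^{[n]})+\sum_{k=1}^m\Delta^{k-1}w_{n-m+k}(u^{[n]})<0.$$
   Context: For $a^{[n]}=(a^1,\dots,a^n)\in A^n$ extend indices by $a^s=a^{s-n}$ for $s\ge n+1$, and define $$v_i^\Delta(a^{[n]})=\frac{\sum_{k=1}^n\Delta^{k-1}u_i(a^{i+k-1})}{\sum_{k=1}^n\Delta^{k-1}},\qquad W_\lambda(a^{[n]},\Delta)=\sum_{i=1}^n\lambda_i v_i^\Delta(a^{[n]}).$$ $\mathcal{A}^*_\lambda(\Delta)\subseteq A^n$ is the set of maximizers of $W_\lambda(\cdot,\Delta)$ over $A^n$, and $\mathcal{U}^*_\lambda(\Delta)=\{(u(a^1),\dots,u(a^n)):(a^1,\dots,a^n)\in\mathcal{A}^*_\lambda(\Delta)\}$. $S^0=\{a^{[n]}\in A^n: u(a^1)=u(a^2)=\dots=u(a^n)\}$ and $S^C=A^n\setminus S^0$. For $u^{[n]}=(u^1,\dots,u^n)$ with $u^k\in\mathbb{R}^n$,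 extend indices by $u^m=u^{m-n}$ for $m>n$ and set $w_k(u^{[n]})=\sum_{i=1}^n\lambda_iu_i^{i+k-1}$ for $k=1,\dots,n$. *)

theory Defs
  imports "HOL-Analysis.Analysis"
begin

(* Players and periods are indexed 1..n. An action profile is an element of
   PiE {1..n} Ai; a sequence a^[n] is an element of PiE {1..n} (\<lambda>_. A).
   Indices s \<ge> n+1 are reduced cyclically via cyc. *)

definition cyc :: "nat \<Rightarrow> nat \<Rightarrow> nat" where
  "cyc n s = (s - 1) mod n + 1"

definition profiles :: "nat \<Rightarrow> (nat \<Rightarrow> 'b set) \<Rightarrow> (nat \<Rightarrow> 'b) set" where
  "profiles n Ai = PiE {1..n} Ai"

definition seqs :: "nat \<Rightarrow> (nat \<Rightarrow> 'b set) \<Rightarrow> (nat \<Rightarrow> (nat \<Rightarrow> 'b)) set" where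
  "seqs n Ai = PiE {1..n} (\<lambda>_. profiles n Ai)"

definition vD :: "nat \<Rightarrow> (nat \<Rightarrow> (nat \<Rightarrow> 'b) \<Rightarrow> real) \<Rightarrow> nat \<Rightarrow> real
                  \<Rightarrow> (nat \<Rightarrow> (nat \<Rightarrow> 'b)) \<Rightarrow> real" where
  "vD n u i \<Delta> as =
     (\<Sum>k=1..n. \<Delta>^(k-1) * u i (as (cyc n (i+k-1)))) / (\<Sum>k=1..n. \<Delta>^(k-1))"

definition W :: "nat \<Rightarrow> (nat \<Rightarrow> (nat \<Rightarrow> 'b) \<Rightarrow> real) \<Rightarrow> (nat \<Rightarrow> real)
                 \<Rightarrow> (nat \<Rightarrow> (nat \<Rightarrow> 'b)) \<Rightarrow> real \<Rightarrow> real" where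
  "W n u lam as \<Delta> = (\<Sum>i=1..n. lam i * vD n u i \<Delta> as)"

definition Astar :: "nat \<Rightarrow> (nat \<Rightarrow> 'b set) \<Rightarrow> (nat \<Rightarrow> (nat \<Rightarrow> 'b) \<Rightarrow> real)
                     \<Rightarrow> (nat \<Rightarrow> real) \<Rightarrow> real \<Rightarrow> (nat \<Rightarrow> (nat \<Rightarrow> 'b)) set" where
  "Astar n Ai u lam \<Delta> =
     {as \<in> seqs n Ai. \<forall>bs \<in> seqs n Ai. W n u lam bs \<Delta> \<le> W n u lam as \<Delta>}"

(* payoff vector sequence u^[n]: U k i = u_i(a^k), for k, i in {1..n} *)
definition payseq :: "nat \<Rightarrow> (nat \<Rightarrow> (nat \<Rightarrow> 'b) \<Rightarrow> real)
                      \<Rightarrow> (nat \<Rightarrow> (nat \<Rightarrow> 'b)) \<Rightarrow> nat \<Rightarrow> nat \<Rightarrow> real" where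
  "payseq n u as = (\<lambda>k\<in>{1..n}. \<lambda>i\<in>{1..n}. u i (as k))"

definition Ustar :: "nat \<Rightarrow> (nat \<Rightarrow> 'b set) \<Rightarrow> (nat \<Rightarrow> (nat \<Rightarrow> 'b) \<Rightarrow> real)
                     \<Rightarrow> (nat \<Rightarrow> real) \<Rightarrow> real \<Rightarrow> (nat \<Rightarrow> nat \<Rightarrow> real) set" where
  "Ustar n Ai u lam \<Delta> = payseq n u ` Astar n Ai u lam \<Delta>"

definition S0 :: "nat \<Rightarrow> (nat \<Rightarrow> 'b set) \<Rightarrow> (nat \<Rightarrow> (nat \<Rightarrow> 'b) \<Rightarrow> real)
                  \<Rightarrow> (nat \<Rightarrow> (nat \<Rightarrow> 'b)) set" where
  "S0 n Ai u = {as \<in> seqs n Ai. \<forall>k\<in>{1..n}. \<forall>l\<in>{1..n}. \<forall>i\<in>{1..n}. u i (as k) = u i (as l)}"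

definition SC :: "nat \<Rightarrow> (nat \<Rightarrow> 'b set) \<Rightarrow> (nat \<Rightarrow> (nat \<Rightarrow> 'b) \<Rightarrow> real)
                  \<Rightarrow> (nat \<Rightarrow> (nat \<Rightarrow> 'b)) set" where
  "SC n Ai u = seqs n Ai - S0 n Ai u"

definition wk :: "nat \<Rightarrow> (nat \<Rightarrow> real) \<Rightarrow> (nat \<Rightarrow> nat \<Rightarrow> real) \<Rightarrow> nat \<Rightarrow> real" where
  "wk n lam U k = (\<Sum>i=1..n. lam i * U (cyc n (i+k-1)) i)"

end

theory Submission
  imports Defs
begin

lemma telesc: "(\<Sum>s=1..n. g (Suc s)) + g 1 = (\<Sum>s=1..n. g s) + (g (Suc n) :: real)"
  by (induction n) (auto simp: sum.atLeast1_atMost_eq)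

lemma per_sum:
  fixes f :: "nat \<Rightarrow> real" and n k :: nat
  assumes "\<And>j. j \<ge> 1 \<Longrightarrow> f (j+n) = (f j :: real)"
  shows "(\<Sum>s=1..n. f (s+k)) = (\<Sum>j=1..n. f j)"
proof (induction k)
  case 0 then show ?case by simp
next
  case (Suc k)
  have "(\<Sum>s=1..n. f (Suc s + k)) + f (1+k) = (\<Sum>s=1..n. f (s+k)) + f (Suc n + k)"
    using telesc[of "\<lambda>s. f (s+k)" n] by simp
  moreover have "f (Suc n + k) = f (1+k)" using assms[of "1+k"] by (simp add: ac_simps)
  ultimately show ?case using Suc by simp
qed

lemma split_id:
  fixes f :: "nat \<Rightarrow> real"
  assumes per: "\<And>j. j \<ge> 1 \<Longrightarrow> f (j+n) = f j" and m: "1 \<le> m" "m < n"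
  shows "(\<Sum>k=1..n. D^(k-1) * f (k + (n-m))) = (\<Sum>k=1..m. D^(k-1) * f (n-m+k)) + D^m * (\<Sum>k=1..n-m. D^(k-1) * f k)"
    and "(\<Sum>k=1..n. D^(k-1) * f k) = (\<Sum>k=1..m. D^(k-1) * f k) + D^m * (\<Sum>k=1..n-m. D^(k-1) * f (n-(n-m)+k))"
proof -
  have nn: "n = m + (n-m)" using m by simp
  have sp: "\<And>g::nat\<Rightarrow>real. (\<Sum>k=1..n. g k) = (\<Sum>k=1..m. g k) + (\<Sum>k=1..n-m. g (k+m))"
  proof -
    fix g :: "nat \<Rightarrow> real"
    have "(\<Sum>k=1..n. g k) = (\<Sum>k=1..m + (n-m). g k)" using nn by simp
    also have "\<dots> = (\<Sum>k=1..m. g k) + (\<Sum>k=m+1..m+(n-m). g k)"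
      by (rule sum.ub_add_nat) simp
    also have "(\<Sum>k=m+1..m+(n-m). g k) = (\<Sum>k=1..n-m. g (k+m))"
      using sum.shift_bounds_cl_nat_ivl[of g 1 m "n-m"] by (simp add: ac_simps)
    finally show "(\<Sum>k=1..n. g k) = (\<Sum>k=1..m. g k) + (\<Sum>k=1..n-m. g (k+m))" .
  qed
  have pw: "\<And>k. k \<ge> 1 \<Longrightarrow> D^(k+m-1) = D^m * D^(k-1)"
    by (simp add: power_add[symmetric] ac_simps)
  show "(\<Sum>k=1..n. D^(k-1) * f (k + (n-m))) = (\<Sum>k=1..m. D^(k-1) * f (n-m+k)) + D^m * (\<Sum>k=1..n-m. D^(k-1) * f k)"
  proof -
    have "(\<Sum>k=1..n-m. D^(k+m-1) * f (k+m + (n-m))) = D^m * (\<Sum>k=1..n-m. D^(k-1) * f k)"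
      unfolding sum_distrib_left
    proof (rule sum.cong)
      fix k assume k: "k \<in> {1..n-m}"
      have "k+m+(n-m) = k + n" using m by simp
      then show "D^(k+m-1) * f (k+m + (n-m)) = D^m * (D^(k-1) * f k)"
        using per[of k] k pw[of k] by simp
    qed simp
    then show ?thesis using sp[of "\<lambda>k. D^(k-1) * f (k + (n-m))"] by (simp add: ac_simps)
  qed
  show "(\<Sum>k=1..n. D^(k-1) * f k) = (\<Sum>k=1..m. D^(k-1) * f k) + D^m * (\<Sum>k=1..n-m. D^(k-1) * f (n-(n-m)+k))"
  proof -
    have "(\<Sum>k=1..n-m. D^(k+m-1) * f (k+m)) = D^m * (\<Sum>k=1..n-m. D^(k-1) * f (n-(n-m)+k))"
      unfolding sum_distrib_left
    proof (rule sum.cong)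
      fix k assume k: "k \<in> {1..n-m}"
      have "n-(n-m)+k = k + m" using m by simp
      then show "D^(k+m-1) * f (k+m) = D^m * (D^(k-1) * f (n-(n-m)+k))"
        using k pw[of k] by (simp add: ac_simps)
    qed simp
    then show ?thesis using sp[of "\<lambda>k. D^(k-1) * f k"] by simp
  qed
qed

definition FF :: "nat \<Rightarrow> (nat \<Rightarrow> (nat \<Rightarrow> 'b) \<Rightarrow> real) \<Rightarrow> (nat \<Rightarrow> real) \<Rightarrow> (nat \<Rightarrow> (nat \<Rightarrow> 'b)) \<Rightarrow> nat \<Rightarrow> real" where
  "FF n u lam bs k = (\<Sum>i=1..n. lam i * u i (bs (cyc n (i+k-1))))"

lemma W_eq: "W n u lam bs \<Delta> = (\<Sum>k=1..n. \<Delta>^(k-1) * FF n u lam bs k) / (\<Sum>k=1..n. \<Delta>^(k-1))"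
  unfolding W_def vD_def FF_def
  apply (simp add: sum_divide_distrib[symmetric] sum_distrib_left mult_ac)
  apply (rule disjI2)
  apply (rule sum.swap)
  done

lemma cyc_in: "0 < n \<Longrightarrow> cyc n x \<in> {1..n}"
  unfolding cyc_def by (simp add: Suc_leI)

lemma cyc_id: "x \<in> {1..n} \<Longrightarrow> cyc n x = x"
  unfolding cyc_def by auto

lemma cyc_cyc: "1 \<le> x \<Longrightarrow> cyc n (cyc n x + s) = cyc n (x + s)"
  unfolding cyc_def by (simp add: mod_add_left_eq)

lemma cyc_per: "1 \<le> x \<Longrightarrow> cyc n (x + n) = cyc n x"
proof -
  assume "1 \<le> x"
  then have "x + n - 1 = (x - 1) + n" by simp
  then show ?thesis unfolding cyc_def by simp
qed

lemma ineq_aux: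
  fixes a b x y :: real
  assumes "0 \<le> a" "0 \<le> b" "a \<le> x * b" "b \<le> y * a" "0 < x" "x \<le> 1" "0 < y" "y \<le> 1"
  shows "x * b = a"
proof -
  have "x * b \<le> x * (y * a)" using assms by (simp add: mult_left_mono)
  also have "\<dots> = (x*y) * a" by simp
  also have "\<dots> \<le> a" using assms by (simp add: mult_le_one mult_left_le_one_le)
  finally show ?thesis using assms by simp
qed

theorem lemma5:
  fixes n :: nat and Ai :: "nat \<Rightarrow> 'b set"
    and u :: "nat \<Rightarrow> (nat \<Rightarrow> 'b) \<Rightarrow> real"
    and lam :: "nat \<Rightarrow> real" and \<Delta> :: real
  assumes "n \<ge> 2"
    and "\<And>i. i \<in> {1..n} \<Longrightarrow> Ai i \<noteq> {} \<and> finite (Ai i)"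
    and "0 < \<Delta>" and "\<Delta> \<le> 1"
    and "\<exists>i\<in>{1..n}. lam i \<noteq> 0"
    and "Astar n Ai u lam \<Delta> \<subseteq> SC n Ai u"
  shows "\<forall>U \<in> Ustar n Ai u lam \<Delta>. \<exists>m\<in>{1..n-1}.
           - (\<Sum>k=1..m. \<Delta>^(k-1) * wk n lam U k)
           + (\<Sum>k=1..m. \<Delta>^(k-1) * wk n lam U (n-m+k)) < 0"
proof
  fix U assume "U \<in> Ustar n Ai u lam \<Delta>"
  then obtain as where asA: "as \<in> Astar n Ai u lam \<Delta>" and U: "U = payseq n u as"
    unfolding Ustar_def by auto
  have n0: "0 < n" using assms(1) by simp
  have asS: "as \<in> seqs n Ai" and opt: "\<And>bs. bs \<in> seqs n Ai \<Longrightarrow> W n u lam bs \<Delta> \<le> W n u lam as \<Delta>"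
    using asA unfolding Astar_def by auto
  have asj: "\<And>j. j \<in> {1..n} \<Longrightarrow> as j \<in> profiles n Ai" using asS unfolding seqs_def by auto
  define f where "f = FF n u lam as"
  have wkf: "wk n lam U k = f k" for k
    unfolding wk_def f_def FF_def U payseq_def using cyc_in[OF n0]
    by (intro sum.cong) auto
  define D where "D = (\<Sum>k=1..n. \<Delta>^(k-1))"
  have "D = 1 + (\<Sum>k=2..n. \<Delta>^(k-1))" unfolding D_def using n0
    by (simp add: sum.atLeast_Suc_atMost numeral_2_eq_2)
  moreover have "(\<Sum>k=2..n. \<Delta>^(k-1)) \<ge> 0" using assms(3) by (intro sum_nonneg) simp
  ultimately have D1: "D \<ge> 1" by simp
  define V where "V s = (\<Sum>k=1..n. \<Delta>^(k-1) * f (k+s))" for s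
  have per: "f (j+n) = f j" if "j \<ge> 1" for j
    unfolding f_def FF_def
  proof (rule sum.cong)
    fix i assume "i \<in> {1..n}"
    then have e: "i + (j+n) - 1 = (i+j-1) + n" and g1: "i+j-1 \<ge> 1" using that by auto
    then have "cyc n (i + (j+n) - 1) = cyc n ((i+j-1) + n)" by (simp only: e)
    then show "lam i * u i (as (cyc n (i + (j + n) - 1))) = lam i * u i (as (cyc n (i + j - 1)))"
      using cyc_per[OF g1, of n] by simp
  qed simp
  have Was: "W n u lam as \<Delta> = V 0 / D" unfolding W_eq V_def D_def f_def by simp
  have Vle: "V s \<le> V 0" for s
  proof -
    define sh where "sh = (\<lambda>j\<in>{1..n}. as (cyc n (j+s)))"
    have "sh \<in> seqs n Ai" unfolding sh_def seqs_def
      using asj cyc_in[OF n0] by (simp add: restrict_PiE_iff)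
    then have "W n u lam sh \<Delta> \<le> V 0 / D" using opt Was by metis
    moreover have "FF n u lam sh k = f (k+s)" if "k \<ge> 1" for k
      unfolding f_def FF_def
    proof (rule sum.cong)
      fix i assume "i \<in> {1..n}"
      then have "i+k-1 \<ge> 1" "i + k - 1 + s = i + (k+s) - 1" using that by auto
      then have "sh (cyc n (i+k-1)) = as (cyc n (i + (k+s) - 1))"
        unfolding sh_def using cyc_in[OF n0] cyc_cyc[of "i+k-1" n s]
        by (simp add: ac_simps)
      then show "lam i * u i (sh (cyc n (i + k - 1))) = lam i * u i (as (cyc n (i + (k + s) - 1)))"
        by simp
    qed simp
    then have "(\<Sum>k=1..n. \<Delta>^(k-1) * FF n u lam sh k) = V s" unfolding V_def
      by (intro sum.cong) auto
    then have "W n u lam sh \<Delta> = V s / D" unfolding W_eq D_def by simp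
    ultimately show ?thesis using D1 by (simp add: divide_right_mono_neg divide_le_cancel)
  qed
  define c where "c j = (\<Sum>i=1..n. lam i * u i (as j))" for j
  have clt: "c j * D < V 0" if j: "j \<in> {1..n}" for j
  proof -
    define cs where "cs = (\<lambda>t\<in>{1..n}. as j)"
    have csS: "cs \<in> seqs n Ai" unfolding cs_def seqs_def using asj j by (simp add: restrict_PiE_iff)
    then have "cs \<in> S0 n Ai u" unfolding S0_def cs_def by auto
    then have "cs \<notin> Astar n Ai u lam \<Delta>" using assms(6) unfolding SC_def by auto
    then obtain bs where "bs \<in> seqs n Ai" "W n u lam cs \<Delta> < W n u lam bs \<Delta>"
      using csS unfolding Astar_def by force
    then have lt: "W n u lam cs \<Delta> < V 0 / D" using opt Was by fastforce
    have "FF n u lam cs k = c j" for k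
      unfolding FF_def c_def cs_def using cyc_in[OF n0] by simp
    then have "W n u lam cs \<Delta> = c j" unfolding W_eq
      using D1 D_def by (simp add: sum_distrib_right[symmetric])
    then show ?thesis using lt D1 by (simp add: pos_less_divide_eq)
  qed
  have sumf: "(\<Sum>j=1..n. f j) = (\<Sum>j=1..n. c j)"
  proof -
    have "(\<Sum>j=1..n. f j) = (\<Sum>i=1..n. lam i * (\<Sum>j=1..n. u i (as (cyc n (j + (i-1))))))"
      unfolding f_def FF_def sum_distrib_left
      by (subst sum.swap) (intro sum.cong refl, simp add: ac_simps)
    also have "\<dots> = (\<Sum>i=1..n. lam i * (\<Sum>j=1..n. u i (as j)))"
    proof (intro sum.cong refl)
      fix i
      have "(\<Sum>j=1..n. u i (as (cyc n (j + (i-1))))) = (\<Sum>j=1..n. u i (as (cyc n j)))"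
        by (rule per_sum) (simp add: cyc_per)
      also have "\<dots> = (\<Sum>j=1..n. u i (as j))" by (intro sum.cong refl) (simp add: cyc_id)
      finally show "lam i * (\<Sum>j=1..n. u i (as (cyc n (j + (i-1))))) = lam i * (\<Sum>j=1..n. u i (as j))"
        by simp
    qed
    also have "\<dots> = (\<Sum>j=1..n. c j)" unfolding c_def sum_distrib_left by (rule sum.swap)
    finally show ?thesis .
  qed
  have sumV: "(\<Sum>s=1..n. V s) = D * (\<Sum>j=1..n. c j)"
  proof -
    have "(\<Sum>s=1..n. V s) = (\<Sum>k=1..n. \<Delta>^(k-1) * (\<Sum>s=1..n. f (s+k)))"
      unfolding V_def sum_distrib_left by (subst sum.swap) (simp add: ac_simps)
    also have "\<dots> = (\<Sum>k=1..n. \<Delta>^(k-1) * (\<Sum>j=1..n. f j))"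
      using per_sum[of f n] per by simp
    also have "\<dots> = D * (\<Sum>j=1..n. c j)" unfolding D_def sumf by (simp add: sum_distrib_right)
    finally show ?thesis .
  qed
  have sumlt: "(\<Sum>s=1..n. V s) < real n * V 0"
  proof -
    have "(\<Sum>j=1..n. c j * D) < (\<Sum>j=1..n. V 0)"
      using clt n0 by (intro sum_strict_mono) auto
    then show ?thesis using sumV by (simp add: sum_distrib_left[symmetric] mult.commute)
  qed
  show "\<exists>m\<in>{1..n-1}. - (\<Sum>k=1..m. \<Delta>^(k-1) * wk n lam U k)
           + (\<Sum>k=1..m. \<Delta>^(k-1) * wk n lam U (n-m+k)) < 0"
  proof (rule ccontr)
    assume "\<not> ?thesis"
    then have T: "\<And>m. m \<in> {1..n-1} \<Longrightarrow> 0 \<le> (\<Sum>k=1..m. \<Delta>^(k-1) * f (n-m+k)) - (\<Sum>k=1..m. \<Delta>^(k-1) * f k)"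
      unfolding wkf by force
    have Veq: "V s = V 0" if s: "s \<in> {1..n}" for s
    proof (cases "s = n")
      case True
      then show ?thesis unfolding V_def using per by (intro sum.cong) auto
    next
      case False
      define m where "m = n - s"
      have m: "1 \<le> m" "m < n" "s = n - m" using s False unfolding m_def by auto
      have m': "1 \<le> n - m" "n - m < n" using m by auto
      note e1 = split_id[where f=f and n=n and m=m and D=\<Delta>, OF per m(1,2)]
      note e2 = split_id[where f=f and n=n and m="n-m" and D=\<Delta>, OF per m']
      have nm: "n - (n-m) = m" using m by simp
      define Sm where "Sm = (\<Sum>k=1..m. \<Delta>^(k-1) * f (n-m+k))"
      define Pm where "Pm = (\<Sum>k=1..m. \<Delta>^(k-1) * f k)"
      define Sm' where "Sm' = (\<Sum>k=1..n-m. \<Delta>^(k-1) * f (n-(n-m)+k))"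
      define Pm' where "Pm' = (\<Sum>k=1..n-m. \<Delta>^(k-1) * f k)"
      have v1: "V (n-m) = Sm + \<Delta>^m * Pm'" unfolding V_def Sm_def Pm'_def by (rule e1(1))
      have v2: "V 0 = Pm + \<Delta>^m * Sm'" unfolding V_def Sm'_def Pm_def using e1(2) by simp
      have v3: "V m = Sm' + \<Delta>^(n-m) * Pm" using e2(1) unfolding V_def Sm'_def Pm_def nm .
      have v4: "V 0 = Pm' + \<Delta>^(n-m) * Sm" using e2(2) unfolding V_def Sm_def Pm'_def nm by simp
      define a where "a = Sm - Pm"
      define b where "b = Sm' - Pm'"
      have a0: "0 \<le> a" unfolding a_def Sm_def Pm_def by (rule T) (use m in auto)
      have b0: "0 \<le> b" unfolding b_def Sm'_def Pm'_def by (rule T) (use m in auto)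
      have "V (n-m) \<le> V 0" "V m \<le> V 0" using Vle by auto
      then have ab: "a \<le> \<Delta>^m * b" and ba: "b \<le> \<Delta>^(n-m) * a"
        using v1 v2 v3 v4 unfolding a_def b_def by (simp_all add: right_diff_distrib)
      have "\<Delta>^m * b = a"
        using ineq_aux[OF a0 b0 ab ba] assms(3,4) by (simp add: power_le_one)
      then show ?thesis using v1 v2 m(3) unfolding a_def b_def by (simp add: right_diff_distrib)
    qed
    then have "(\<Sum>s=1..n. V s) = real n * V 0" by simp
    then show False using sumlt by simp
  qed
qed

end
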